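(* Let $S$ be a standard tableau of type $(i_1,\dots,i_m)$ and $D(S)$ its dependence graph. (a) If $B$ is a black arc of $D(S)$ with $b(B)>1$, then there is a black arc sequence from $s(B)+1$ to $t(B)-1$. (b) Let $B$ be a green arc of $D(S)$ with $b(B)>1$. If there is no green arc other than $B$ nested inside $B$, then there is a black arc sequence from $0$ to $t(B)-1$. If there is a green arc other than $B$ nested inside $B$, then there is a black arc sequence from the rightmost endpoint of the green arcs (other than $B$) nested inside $B$ to $t(B)-1$.
   Context: Setting: $n\ge2k\ge0$, $0<i_1<\dots<i_m=n$. A standard tableau of type $(i_1,\dots,i_m)$ is a two-row Young diagram (top row $n-k$ boxes, bottom $k$) in which $i_l$ occurs exactly $i_l-i_{l-1}$ times ($i_0=0$), entries strictly decreasing along rows and each column's top entry $\ge$ its bottom entry. Double entries are $i_l$ with $i_l-i_{l-1}=2$ (in both rows). Weight sequence $a_1\dots a_n$: $a_{i-1}=a_i=\times$ if $i$ is a double entry, otherwise $a_i=\wedge$ if $i$ is in the top row and $a_i=\vee$ if in the bottom row. Extended cup diagram $eC(S)$: prepend $n-2k$ points labelled $\vee$ at positions $-(n-2k)+1,\dots,0$ to the weight sequence (positions $1,\dots,n$), and repeatedly join by a cup any $\vee\wedge$ pair (in this order) that is adjacent after ignoring $\times$'s and already joined points; cups starting at an added point are green, the others black. Dependence graph $D(S)$: nodes numbered $-(n-2k),\dots,0$ and $i_1,\dots,i_m$. For each double entry $i_s$ there is a black arc from $i_s-2$ to $i_s$ labelled $N^{-1}$; for each cup of $eC(S)$ joining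 $i<j$ there is an arc of the same colour from $i-1$ to $j$, labelled $N^{-l}$ if black and $e_l$ if green, $l=\frac12(j-i+1)$. For an arc $B$, $s(B)$ and $t(B)$ are the numbers of its left and right endpoint nodes and $b(B)=\frac12(t(B)-s(B))$. An arc $B'$ is nested inside $B$ if $s(B)\le s(B')<t(B')\le t(B)$. An arc sequence from $a$ to $b$ is a sequence of arcs $B_1,\dots,B_r$ with $s(B_1)=a$, $t(B_r)=b$, $t(B_i)=s(B_{i+1})$; it is black if all $B_i$ are black. *)

theory Defs
  imports Complex_Main
begin

datatype wt = Vee | Wedge | Cross
datatype colour = Black | Green

text \<open>Type (i_1,...,i_m) as a list; i_0 = 0.\<close>
definition type_seq :: "nat \<Rightarrow> nat list \<Rightarrow> bool" where
  "type_seq n is \<longleftrightarrow> is \<noteq> [] \<and> sorted_wrt (<) is \<and> 0 < hd is \<and> last is = n"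

definition prev_entry :: "nat list \<Rightarrow> nat \<Rightarrow> nat" where
  "prev_entry is l = (if l = 0 then 0 else is ! (l - 1))"

text \<open>Standard tableau: trow row (n-k boxes, left to right) and bottom row (k boxes).\<close>
definition std_tableau :: "nat \<Rightarrow> nat \<Rightarrow> nat list \<Rightarrow> nat list \<Rightarrow> nat list \<Rightarrow> bool" where
  "std_tableau n k is trow brow \<longleftrightarrow>
     type_seq n is \<and> length trow = n - k \<and> length brow = k \<and>
     set trow \<union> set brow \<subseteq> set is \<and>
     (\<forall>l < length is. count_list (trow @ brow) (is ! l) = is ! l - prev_entry is l) \<and>
     sorted_wrt (>) trow \<and> sorted_wrt (>) brow \<and>
     (\<forall>j < k. brow ! j \<le> trow ! j)"

definition double_entry :: "nat list \<Rightarrow> nat \<Rightarrow> bool" where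
  "double_entry is x \<longleftrightarrow> (\<exists>l < length is. is ! l = x \<and> is ! l - prev_entry is l = 2)"

definition weight :: "nat list \<Rightarrow> nat list \<Rightarrow> nat list \<Rightarrow> nat \<Rightarrow> wt" where
  "weight is trow brow p =
     (if double_entry is p \<or> double_entry is (p + 1) then Cross
      else if p \<in> set trow then Wedge
      else if p \<in> set brow then Vee else Cross)"

text \<open>Extended weight: added points -(n-2k)+1..0 are labelled Vee.\<close>
definition ext_weight :: "nat list \<Rightarrow> nat list \<Rightarrow> nat list \<Rightarrow> int \<Rightarrow> wt" where
  "ext_weight is trow brow p = (if p \<le> 0 then Vee else weight is trow brow (nat p))"

definition joined :: "(int \<times> int) set \<Rightarrow> int \<Rightarrow> bool" where
  "joined C p \<longleftrightarrow> (\<exists>q. (p, q) \<in> C \<or> (q, p) \<in> C)"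

definition cup_step :: "nat \<Rightarrow> nat \<Rightarrow> nat list \<Rightarrow> nat list \<Rightarrow> nat list
    \<Rightarrow> (int \<times> int) set \<Rightarrow> (int \<times> int) set \<Rightarrow> bool" where
  "cup_step n k is trow brow C C' \<longleftrightarrow>
     (\<exists>i j. - int (n - 2 * k) + 1 \<le> i \<and> i < j \<and> j \<le> int n \<and>
        ext_weight is trow brow i = Vee \<and> ext_weight is trow brow j = Wedge \<and>
        \<not> joined C i \<and> \<not> joined C j \<and>
        (\<forall>p. i < p \<and> p < j \<longrightarrow> ext_weight is trow brow p = Cross \<or> joined C p) \<and>
        C' = insert (i, j) C)"

definition final_cups :: "nat \<Rightarrow> nat \<Rightarrow> nat list \<Rightarrow> nat list \<Rightarrow> nat list
    \<Rightarrow> (int \<times> int) set \<Rightarrow> bool" where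
  "final_cups n k is trow brow C \<longleftrightarrow>
     (cup_step n k is trow brow)\<^sup>*\<^sup>* {} C \<and> \<not> (\<exists>C'. cup_step n k is trow brow C C')"

definition is_cup :: "nat \<Rightarrow> nat \<Rightarrow> nat list \<Rightarrow> nat list \<Rightarrow> nat list \<Rightarrow> int \<Rightarrow> int \<Rightarrow> bool" where
  "is_cup n k is trow brow i j \<longleftrightarrow> (\<exists>C. final_cups n k is trow brow C \<and> (i, j) \<in> C)"

text \<open>Arcs: (left endpoint s(B), right endpoint t(B), colour). Labels are omitted.\<close>
type_synonym arc = "int \<times> int \<times> colour"

definition src :: "arc \<Rightarrow> int" where "src B = fst B"
definition tgt :: "arc \<Rightarrow> int" where "tgt B = fst (snd B)"
definition col :: "arc \<Rightarrow> colour" where "col B = snd (snd B)"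

definition bval :: "arc \<Rightarrow> real" where "bval B = real_of_int (tgt B - src B) / 2"

definition dep_arcs :: "nat \<Rightarrow> nat \<Rightarrow> nat list \<Rightarrow> nat list \<Rightarrow> nat list \<Rightarrow> arc set" where
  "dep_arcs n k is trow brow =
     {(int x - 2, int x, Black) | x. double_entry is x} \<union>
     {(i - 1, j, if i \<le> 0 then Green else Black) | i j. is_cup n k is trow brow i j}"

definition nested :: "arc \<Rightarrow> arc \<Rightarrow> bool" where
  "nested B' B \<longleftrightarrow> src B \<le> src B' \<and> src B' < tgt B' \<and> tgt B' \<le> tgt B"

fun arc_seq :: "int \<Rightarrow> arc list \<Rightarrow> int \<Rightarrow> bool" where
  "arc_seq a [] b \<longleftrightarrow> a = b"
| "arc_seq a (B # Bs) b \<longleftrightarrow> src B = a \<and> arc_seq (tgt B) Bs b"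

definition black_arc_seq :: "arc set \<Rightarrow> int \<Rightarrow> arc list \<Rightarrow> int \<Rightarrow> bool" where
  "black_arc_seq A a Bs b \<longleftrightarrow> set Bs \<subseteq> A \<and> arc_seq a Bs b \<and> (\<forall>B \<in> set Bs. col B = Black)"

end

theory Submission
  imports Defs
begin

lemma sorted_gt_count: "sorted_wrt (>) (xs::nat list) \<Longrightarrow> count_list xs x \<le> 1"
  proof (induction xs)
  case (Cons a xs)
  have "\<forall>y\<in>set xs. y < a" using Cons.prems by simp
  hence "a \<notin> set xs" by (meson less_irrefl)
  thus ?case using Cons by (auto simp: count_list_0_iff)
qed simp

locale tab =
  fixes n k :: nat and "is" trow brow :: "nat list"
  assumes le: "2 * k \<le> n" and std: "std_tableau n k is trow brow"
begin

lemma ts: "type_seq n is" using std by (simp add: std_tableau_def)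
lemma srt: "sorted_wrt (<) is" using ts by (simp add: type_seq_def)

lemma de_ge2: "double_entry is x \<Longrightarrow> x \<ge> 2"
  unfolding double_entry_def by auto

lemma de_sep:
  assumes "double_entry is x" "double_entry is y" "x < y" shows "x + 2 \<le> y"
proof -
  obtain l where l: "l < length is" "is ! l = x" "is ! l - prev_entry is l = 2"
    using assms(1) unfolding double_entry_def by auto
  obtain l' where l': "l' < length is" "is ! l' = y" "is ! l' - prev_entry is l' = 2"
    using assms(2) unfolding double_entry_def by auto
  have "l < l'"
  proof (rule ccontr)
    assume "\<not> l < l'"
    hence "l' \<le> l" by simp
    hence "is ! l' \<le> is ! l" using srt l(1)
      by (metis le_less sorted_wrt_nth_less order.refl less_imp_le)
    thus False using l l' assms(3) by simp
  qed
  hence "l' \<noteq> 0" by simp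
  hence pe: "prev_entry is l' = is ! (l' - 1)" by (simp add: prev_entry_def)
  have "l \<le> l' - 1" using \<open>l < l'\<close> by simp
  hence "is ! l \<le> is ! (l' - 1)" using srt l'(1)
    by (metis le_less sorted_wrt_nth_less less_imp_le le_less_trans diff_less zero_less_one \<open>l' \<noteq> 0\<close> not_gr_zero)
  thus ?thesis using l l' pe by simp
qed

lemma cross_de:
  assumes "1 \<le> p" "p \<le> n" "weight is trow brow p = Cross"
  shows "double_entry is p \<or> double_entry is (p + 1)"
proof (rule ccontr)
  assume nd: "\<not> (double_entry is p \<or> double_entry is (p + 1))"
  have ne: "is \<noteq> []" and lst: "last is = n" using ts by (auto simp: type_seq_def)
  have "\<exists>l < length is. is ! l \<ge> p"
    using ne lst assms(2) by (metis diff_less last_conv_nth length_greater_0_conv zero_less_one)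
  define l where "l = (LEAST l. l < length is \<and> is ! l \<ge> p)"
  have l: "l < length is" "is ! l \<ge> p"
    using LeastI_ex[OF \<open>\<exists>l < length is. is ! l \<ge> p\<close>] unfolding l_def by auto
  have pv: "prev_entry is l < p"
  proof (cases "l = 0")
    case True thus ?thesis using assms(1) by (simp add: prev_entry_def)
  next
    case False
    have "\<not> (l - 1 < length is \<and> is ! (l - 1) \<ge> p)"
      using not_less_Least[of "l - 1" "\<lambda>l. l < length is \<and> is ! l \<ge> p"] False
      unfolding l_def[symmetric] by simp
    thus ?thesis using False l(1) by (auto simp add: prev_entry_def)
  qed
  have cnt: "count_list (trow @ brow) (is ! l) = is ! l - prev_entry is l"
    using std l(1) by (simp add: std_tableau_def)
  have "count_list trow (is ! l) \<le> 1" "count_list brow (is ! l) \<le> 1"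
    using std sorted_gt_count by (auto simp: std_tableau_def)
  hence c2: "is ! l - prev_entry is l \<le> 2" using cnt by simp
  show False
  proof (cases "is ! l = p")
    case True
    hence "count_list (trow @ brow) p \<ge> 1" using cnt pv by simp
    hence "p \<in> set trow \<or> p \<in> set brow"
      by (metis count_list_0_iff Un_iff count_list_append set_append not_one_le_zero)
    thus False using assms(3) nd by (auto simp: weight_def split: if_splits)
  next
    case False
    hence "is ! l = p + 1" "is ! l - prev_entry is l = 2" using l(2) pv c2 by auto
    hence "double_entry is (p + 1)" using l(1) unfolding double_entry_def by metis
    thus False using nd by simp
  qed
qed

abbreviation "ew \<equiv> ext_weight is trow brow"
abbreviation "stp \<equiv> cup_step n k is trow brow"

lemma ew_cross:
  assumes "ew p = Cross" "p \<le> int n"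
  shows "\<exists>x. double_entry is x \<and> (p = int x \<or> p = int x - 1)"
proof -
  have p0: "0 < p" using assms by (auto simp: ext_weight_def split: if_splits)
  have w: "weight is trow brow (nat p) = Cross" using assms p0 by (simp add: ext_weight_def)
  have "double_entry is (nat p) \<or> double_entry is (nat p + 1)"
    using cross_de[OF _ _ w] p0 assms(2) by simp
  thus ?thesis
  proof
    assume "double_entry is (nat p)" thus ?thesis using p0 by (intro exI[of _ "nat p"]) simp
  next
    assume "double_entry is (nat p + 1)" thus ?thesis using p0 by (intro exI[of _ "nat p + 1"]) simp
  qed
qed

lemma de_cross:
  assumes "double_entry is x"
  shows "ew (int x) = Cross" "ew (int x - 1) = Cross"
proof -
  have "x \<ge> 2" using de_ge2 assms .
  thus "ew (int x) = Cross" using assms by (simp add: ext_weight_def weight_def)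
  have "nat (int x - 1) = x - 1" "x - 1 + 1 = x" using \<open>x \<ge> 2\<close> by auto
  thus "ew (int x - 1) = Cross" using assms \<open>x \<ge> 2\<close> by (simp add: ext_weight_def weight_def)
qed

definition Inv :: "(int \<times> int) set \<Rightarrow> bool" where
  "Inv C \<longleftrightarrow> finite C \<and>
    (\<forall>i j. (i,j) \<in> C \<longrightarrow> - int (n - 2 * k) + 1 \<le> i \<and> i < j \<and> j \<le> int n \<and> ew i = Vee \<and> ew j = Wedge) \<and>
    (\<forall>i j i' j'. (i,j) \<in> C \<longrightarrow> (i',j') \<in> C \<longrightarrow> (i,j) \<noteq> (i',j') \<longrightarrow> i \<noteq> i' \<and> j \<noteq> j') \<and>
    (\<forall>i j p. (i,j) \<in> C \<longrightarrow> i < p \<longrightarrow> p < j \<longrightarrow>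
        ew p = Cross \<or> (\<exists>p' q'. (p',q') \<in> C \<and> i < p' \<and> q' < j \<and> (p = p' \<or> p = q')))"

lemma Inv_empty: "Inv {}" by (simp add: Inv_def)

lemma Inv_step:
  assumes inv: "Inv C" and st: "stp C C'" shows "Inv C'"
proof -
  obtain i j where ij: "- int (n - 2 * k) + 1 \<le> i" "i < j" "j \<le> int n"
    "ew i = Vee" "ew j = Wedge" "\<not> joined C i" "\<not> joined C j"
    "\<forall>p. i < p \<and> p < j \<longrightarrow> ew p = Cross \<or> joined C p" "C' = insert (i, j) C"
    using st unfolding cup_step_def by blast
  have I1: "\<And>a b. (a,b) \<in> C \<Longrightarrow> - int (n - 2 * k) + 1 \<le> a \<and> a < b \<and> b \<le> int n \<and> ew a = Vee \<and> ew b = Wedge"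
    using inv by (simp add: Inv_def)
  have I2: "\<And>a b a' b'. (a,b) \<in> C \<Longrightarrow> (a',b') \<in> C \<Longrightarrow> (a,b) \<noteq> (a',b') \<Longrightarrow> a \<noteq> a' \<and> b \<noteq> b'"
    using inv unfolding Inv_def by blast
  have I3: "\<And>a b p. (a,b) \<in> C \<Longrightarrow> a < p \<Longrightarrow> p < b \<Longrightarrow>
        ew p = Cross \<or> (\<exists>p' q'. (p',q') \<in> C \<and> a < p' \<and> q' < b \<and> (p = p' \<or> p = q'))"
    using inv by (simp add: Inv_def)
  have nj: "\<And>q. (i,q) \<notin> C \<and> (q,i) \<notin> C \<and> (j,q) \<notin> C \<and> (q,j) \<notin> C"
    using ij(6,7) by (auto simp: joined_def)
  have new3: "ew p = Cross \<or> (\<exists>p' q'. (p',q') \<in> C' \<and> i < p' \<and> q' < j \<and> (p = p' \<or> p = q'))"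
    if "i < p" "p < j" for p
  proof -
    have "ew p = Cross \<or> joined C p" using ij(8) that by blast
    moreover
    { fix q assume pq: "(p, q) \<in> C"
      have "q < j"
      proof (rule ccontr)
        assume "\<not> q < j"
        moreover have "q \<noteq> j" using nj pq by blast
        ultimately have "j < q" by simp
        from I3[OF pq _ this] \<open>p < j\<close> have "ew j = Cross \<or> (\<exists>p' q'. (p',q') \<in> C \<and> (j = p' \<or> j = q'))" by blast
        thus False using ij(5) nj by auto
      qed
      hence ?thesis using pq ij(9) that by blast }
    moreover
    { fix q assume qp: "(q, p) \<in> C"
      have "i < q"
      proof (rule ccontr)
        assume "\<not> i < q"
        moreover have "q \<noteq> i" using nj qp by blast
        ultimately have "q < i" by simp
        from I3[OF qp this] \<open>i < p\<close> have "ew i = Cross \<or> (\<exists>p' q'. (p',q') \<in> C \<and> (i = p' \<or> i = q'))" by blast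
        thus False using ij(4) nj by auto
      qed
      hence ?thesis using qp ij(9) that by blast }
    ultimately show ?thesis unfolding joined_def by blast
  qed
  show ?thesis
    unfolding Inv_def
  proof (intro conjI allI impI)
    show "finite C'" using inv ij(9) by (simp add: Inv_def)
  next
    fix a b assume "(a,b) \<in> C'"
    thus "- int (n - 2 * k) + 1 \<le> a" "a < b" "b \<le> int n" "ew a = Vee" "ew b = Wedge"
      using ij I1 by auto
  next
    fix a b a' b' assume "(a,b) \<in> C'" "(a',b') \<in> C'" "(a,b) \<noteq> (a',b')"
    thus "a \<noteq> a'" "b \<noteq> b'" using ij(9) I2 nj by auto
  next
    fix a b p assume ab: "(a,b) \<in> C'" "a < p" "p < b"
    show "ew p = Cross \<or> (\<exists>p' q'. (p',q') \<in> C' \<and> a < p' \<and> q' < b \<and> (p = p' \<or> p = q'))"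
    proof (cases "(a,b) = (i,j)")
      case True thus ?thesis using new3 ab by auto
    next
      case False
      hence "(a,b) \<in> C" using ab ij(9) by auto
      thus ?thesis using I3[OF _ ab(2,3)] ij(9) by blast
    qed
  qed
qed

lemma Inv_reach: "(stp)\<^sup>*\<^sup>* {} C \<Longrightarrow> Inv C"
  by (induction rule: rtranclp_induct) (auto intro: Inv_step Inv_empty)


lemma Inv_parts:
  assumes "Inv C"
  shows "\<And>a b. (a,b) \<in> C \<Longrightarrow> - int (n - 2 * k) + 1 \<le> a \<and> a < b \<and> b \<le> int n \<and> ew a = Vee \<and> ew b = Wedge"
    and "\<And>a b a' b'. (a,b) \<in> C \<Longrightarrow> (a',b') \<in> C \<Longrightarrow> (a,b) \<noteq> (a',b') \<Longrightarrow> a \<noteq> a' \<and> b \<noteq> b'"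
    and "\<And>a b p. (a,b) \<in> C \<Longrightarrow> a < p \<Longrightarrow> p < b \<Longrightarrow>
        ew p = Cross \<or> (\<exists>p' q'. (p',q') \<in> C \<and> a < p' \<and> q' < b \<and> (p = p' \<or> p = q'))"
    and "finite C"
  using assms unfolding Inv_def by blast+

lemma sub_final:
  assumes invf: "Inv Cf" and fin: "\<not> (\<exists>C'. stp Cf C')"
  shows "stp\<^sup>*\<^sup>* {} C \<Longrightarrow> C \<subseteq> Cf"
proof (induction rule: rtranclp_induct)
  case base thus ?case by simp
next
  case (step C C')
  note I1 = Inv_parts(1)[OF invf] and I2 = Inv_parts(2)[OF invf] and I3 = Inv_parts(3)[OF invf]
  obtain i j where ij: "- int (n - 2 * k) + 1 \<le> i" "i < j" "j \<le> int n"
    "ew i = Vee" "ew j = Wedge" "\<not> joined C i" "\<not> joined C j"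
    "\<forall>p. i < p \<and> p < j \<longrightarrow> ew p = Cross \<or> joined C p" "C' = insert (i, j) C"
    using step(2) unfolding cup_step_def by blast
  have sub: "C \<subseteq> Cf" by fact
  have nC: "\<And>q. (i,q) \<notin> C \<and> (q,i) \<notin> C \<and> (j,q) \<notin> C \<and> (q,j) \<notin> C"
    using ij(6,7) by (auto simp: joined_def)
  have btw: "\<And>p. i < p \<Longrightarrow> p < j \<Longrightarrow> ew p = Cross \<or> (\<exists>r. (p,r) \<in> C \<or> (r,p) \<in> C)"
    using ij(8) unfolding joined_def by blast
  have "(i,j) \<in> Cf"
  proof (rule ccontr)
    assume nij: "(i,j) \<notin> Cf"
    have ni: "\<not> joined Cf i"
    proof
      assume "joined Cf i"
      then obtain q where "(i,q) \<in> Cf \<or> (q,i) \<in> Cf" unfolding joined_def by blast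
      moreover have "(q,i) \<notin> Cf" for q using I1[of q i] ij(4) by auto
      ultimately have iq: "(i,q) \<in> Cf" by blast
      have "q \<noteq> j" using iq nij by blast
      have "i < q" using I1[OF iq] by simp
      show False
      proof (cases "q < j")
        case True
        have "ew q = Wedge" using I1[OF iq] by simp
        with btw[OF \<open>i < q\<close> True] obtain r where "(q,r) \<in> C \<or> (r,q) \<in> C" by auto
        thus False
        proof
          assume "(q,r) \<in> C" thus False using I1[of q r] sub \<open>ew q = Wedge\<close> by auto
        next
          assume rq: "(r,q) \<in> C"
          hence rqf: "(r,q) \<in> Cf" using sub by blast
          hence "r = i" using I2[OF rqf iq] by auto
          thus False using rq nC by blast
        qed
      next
        case False
        hence "j < q" using \<open>q \<noteq> j\<close> by simp
        from I3[OF iq ij(2) this] ij(5) obtain p' q' where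
          pq: "(p',q') \<in> Cf" "i < p'" "j = p' \<or> j = q'" by auto
        have "j = q'" using pq I1[OF pq(1)] ij(5) by auto
        hence "p' < j" using I1[OF pq(1)] by simp
        have "ew p' = Vee" using I1[OF pq(1)] by simp
        with btw[OF pq(2) \<open>p' < j\<close>] obtain r where "(p',r) \<in> C \<or> (r,p') \<in> C" by auto
        thus False
        proof
          assume "(r,p') \<in> C" thus False using I1[of r p'] sub \<open>ew p' = Vee\<close> by auto
        next
          assume rq: "(p',r) \<in> C"
          hence rqf: "(p',r) \<in> Cf" using sub by blast
          hence "r = j" using I2[OF rqf pq(1)] \<open>j = q'\<close> by auto
          thus False using rq nC by blast
        qed
      qed
    qed
    have nj: "\<not> joined Cf j"
    proof
      assume "joined Cf j"
      then obtain q where "(j,q) \<in> Cf \<or> (q,j) \<in> Cf" unfolding joined_def by blast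
      moreover have "(j,q) \<notin> Cf" for q using I1[of j q] ij(5) by auto
      ultimately have qj: "(q,j) \<in> Cf" by blast
      have "q \<noteq> i" using qj nij by blast
      have "q < j" using I1[OF qj] by simp
      show False
      proof (cases "i < q")
        case True
        have "ew q = Vee" using I1[OF qj] by simp
        with btw[OF True \<open>q < j\<close>] obtain r where "(q,r) \<in> C \<or> (r,q) \<in> C" by auto
        thus False
        proof
          assume "(r,q) \<in> C" thus False using I1[of r q] sub \<open>ew q = Vee\<close> by auto
        next
          assume rq: "(q,r) \<in> C"
          hence rqf: "(q,r) \<in> Cf" using sub by blast
          hence "r = j" using I2[OF rqf qj] by auto
          thus False using rq nC by blast
        qed
      next
        case False
        hence "q < i" using \<open>q \<noteq> i\<close> by simp
        from I3[OF qj this ij(2)] ij(4) obtain p' q' where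
          pq: "(p',q') \<in> Cf" "i = p' \<or> i = q'" by auto
        have "i = p'" using pq I1[OF pq(1)] ij(4) by auto
        thus False using ni pq(1) unfolding joined_def by blast
      qed
    qed
    have "stp Cf (insert (i,j) Cf)"
      unfolding cup_step_def
    proof (intro exI conjI)
      show "\<forall>p. i < p \<and> p < j \<longrightarrow> ew p = Cross \<or> joined Cf p"
        using ij(8) sub unfolding joined_def by blast
    qed (use ij ni nj in auto)
    thus False using fin by blast
  qed
  thus ?case using sub ij(9) by blast
qed

lemma final_unique:
  assumes "final_cups n k is trow brow C1" "final_cups n k is trow brow C2"
  shows "C1 = C2"
proof -
  have "Inv C1" "Inv C2" using assms Inv_reach by (auto simp: final_cups_def)
  thus ?thesis using sub_final assms unfolding final_cups_def by (metis subset_antisym)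
qed

definition good :: "(int \<times> int) set \<Rightarrow> int \<Rightarrow> int \<Rightarrow> bool" where
  "good C a b \<longleftrightarrow> (\<forall>p. a < p \<and> p \<le> b \<longrightarrow>
     (\<exists>x. double_entry is x \<and> (p = int x - 1 \<or> p = int x) \<and> a \<le> int x - 2 \<and> int x \<le> b) \<or>
     (\<exists>p' q'. (p',q') \<in> C \<and> a < p' \<and> q' \<le> b \<and> (p = p' \<or> p = q')))"

lemma reach:
  assumes inv: "Inv C"
    and AD: "\<And>x. double_entry is x \<Longrightarrow> (int x - 2, int x, Black) \<in> A"
    and AC: "\<And>p q. (p,q) \<in> C \<Longrightarrow> 1 \<le> p \<Longrightarrow> (p - 1, q, Black) \<in> A"
  shows "0 \<le> a \<Longrightarrow> a \<le> b \<Longrightarrow> good C a b \<Longrightarrow> \<exists>Bs. black_arc_seq A a Bs b"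
proof (induction "nat (b - a)" arbitrary: a rule: less_induct)
  case less
  note I1 = Inv_parts(1)[OF inv] and I2 = Inv_parts(2)[OF inv] and I3 = Inv_parts(3)[OF inv]
  show ?case
  proof (cases "a = b")
    case True
    hence "black_arc_seq A a [] b" by (simp add: black_arc_seq_def)
    thus ?thesis by blast
  next
    case False
    hence ab: "a + 1 \<le> b" using less.prems by simp
    from less.prems(3)[unfolded good_def, rule_format, of "a + 1"] ab
    have "(\<exists>x. double_entry is x \<and> (a + 1 = int x - 1 \<or> a + 1 = int x) \<and> a \<le> int x - 2 \<and> int x \<le> b) \<or>
     (\<exists>p' q'. (p',q') \<in> C \<and> a < p' \<and> q' \<le> b \<and> (a + 1 = p' \<or> a + 1 = q'))" by simp
    thus ?thesis
    proof
      assume "\<exists>x. double_entry is x \<and> (a + 1 = int x - 1 \<or> a + 1 = int x) \<and> a \<le> int x - 2 \<and> int x \<le> b"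
      then obtain x where x: "double_entry is x" "a = int x - 2" "int x \<le> b" by auto
      have g: "good C (int x) b"
        unfolding good_def
      proof (intro allI impI)
        fix p assume p: "int x < p \<and> p \<le> b"
        hence "a < p" using x by simp
        from less.prems(3)[unfolded good_def, rule_format, OF conjI[OF this]] p
        have "(\<exists>y. double_entry is y \<and> (p = int y - 1 \<or> p = int y) \<and> a \<le> int y - 2 \<and> int y \<le> b) \<or>
            (\<exists>p' q'. (p',q') \<in> C \<and> a < p' \<and> q' \<le> b \<and> (p = p' \<or> p = q'))" by simp
        thus "(\<exists>y. double_entry is y \<and> (p = int y - 1 \<or> p = int y) \<and> int x \<le> int y - 2 \<and> int y \<le> b) \<or>
            (\<exists>p' q'. (p',q') \<in> C \<and> int x < p' \<and> q' \<le> b \<and> (p = p' \<or> p = q'))"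
        proof
          assume "\<exists>y. double_entry is y \<and> (p = int y - 1 \<or> p = int y) \<and> a \<le> int y - 2 \<and> int y \<le> b"
          then obtain y where y: "double_entry is y" "p = int y - 1 \<or> p = int y" "int y \<le> b" by auto
          have "x < y" using y(2) p by auto
          hence "x + 2 \<le> y" using de_sep x(1) y(1) by blast
          thus ?thesis using y by auto
        next
          assume "\<exists>p' q'. (p',q') \<in> C \<and> a < p' \<and> q' \<le> b \<and> (p = p' \<or> p = q')"
          then obtain p' q' where pq: "(p',q') \<in> C" "a < p'" "q' \<le> b" "p = p' \<or> p = q'" by auto
          have "ew p' = Vee" using I1[OF pq(1)] by simp
          moreover have "ew (int x) = Cross" "ew (int x - 1) = Cross" using de_cross x(1) by auto
          ultimately have "p' \<noteq> int x" "p' \<noteq> int x - 1" by auto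
          hence "int x < p'" using pq(2) x(2) by simp
          thus ?thesis using pq by blast
        qed
      qed
      have m: "nat (b - int x) < nat (b - a)" using x by simp
      have "0 \<le> int x" by simp
      from less.hyps[OF m this x(3) g] obtain Bs where "black_arc_seq A (int x) Bs b" by blast
      hence "black_arc_seq A a ((a, int x, Black) # Bs) b"
        using AD[OF x(1)] x(2) by (simp add: black_arc_seq_def src_def tgt_def col_def)
      thus ?thesis by blast
    next
      assume "\<exists>p' q'. (p',q') \<in> C \<and> a < p' \<and> q' \<le> b \<and> (a + 1 = p' \<or> a + 1 = q')"
      then obtain p' q' where pq: "(p',q') \<in> C" "a < p'" "q' \<le> b" "a + 1 = p' \<or> a + 1 = q'" by auto
      have pl: "p' = a + 1" using pq I1[OF pq(1)] by auto
      have cq: "(a + 1, q') \<in> C" using pq pl by simp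
      have wq: "ew q' = Wedge" using I1[OF pq(1)] by simp
      have "a + 1 < q'" using I1[OF cq] by simp
      have g: "good C q' b"
        unfolding good_def
      proof (intro allI impI)
        fix p assume p: "q' < p \<and> p \<le> b"
        hence "a < p" using \<open>a + 1 < q'\<close> by simp
        from less.prems(3)[unfolded good_def, rule_format, OF conjI[OF this]] p
        have "(\<exists>y. double_entry is y \<and> (p = int y - 1 \<or> p = int y) \<and> a \<le> int y - 2 \<and> int y \<le> b) \<or>
            (\<exists>p' q'. (p',q') \<in> C \<and> a < p' \<and> q' \<le> b \<and> (p = p' \<or> p = q'))" by simp
        thus "(\<exists>y. double_entry is y \<and> (p = int y - 1 \<or> p = int y) \<and> q' \<le> int y - 2 \<and> int y \<le> b) \<or>
            (\<exists>p'' q''. (p'',q'') \<in> C \<and> q' < p'' \<and> q'' \<le> b \<and> (p = p'' \<or> p = q''))"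
        proof
          assume "\<exists>y. double_entry is y \<and> (p = int y - 1 \<or> p = int y) \<and> a \<le> int y - 2 \<and> int y \<le> b"
          then obtain y where y: "double_entry is y" "p = int y - 1 \<or> p = int y" "int y \<le> b" by auto
          have "ew (int y - 1) = Cross" using de_cross y(1) by auto
          hence "int y - 1 \<noteq> q'" using wq by auto
          hence "q' \<le> int y - 2" using y(2) p by auto
          thus ?thesis using y by auto
        next
          assume "\<exists>p' q'. (p',q') \<in> C \<and> a < p' \<and> q' \<le> b \<and> (p = p' \<or> p = q')"
          then obtain p'' q'' where pq2: "(p'',q'') \<in> C" "a < p''" "q'' \<le> b" "p = p'' \<or> p = q''" by auto
          have "q' < p''"
          proof (rule ccontr)
            assume "\<not> q' < p''"
            hence le: "p'' \<le> q'" by simp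
            have lt2: "p'' < q''" using I1[OF pq2(1)] by blast
            have wv: "ew p'' = Vee" using I1[OF pq2(1)] by blast
            have "(p'',q'') \<noteq> (a+1, q')"
            proof
              assume "(p'',q'') = (a+1, q')"
              hence "q'' = q'" "p'' = a + 1" by auto
              thus False using pq2(4) p \<open>a + 1 < q'\<close> by linarith
            qed
            hence ne: "p'' \<noteq> a + 1" "q'' \<noteq> q'" using I2[OF pq2(1) cq] by blast+
            have "p'' \<noteq> q'" using wv wq by auto
            hence r1: "a + 1 < p''" and r2: "p'' < q'" using le ne(1) pq2(2) by linarith+
            have "ew p'' \<noteq> Cross" using wv by simp
            with I3[OF cq r1 r2] obtain p3 q3 where
              c3: "(p3,q3) \<in> C" "q3 < q'" "p'' = p3 \<or> p'' = q3" by blast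
            have "ew q3 = Wedge" using I1[OF c3(1)] by blast
            hence "p'' \<noteq> q3" using wv by auto
            hence "p'' = p3" using c3(3) by blast
            hence "q3 = q''" using I2[OF c3(1) pq2(1)] by blast
            thus False using c3(2) pq2(4) p lt2 by linarith
          qed
          thus ?thesis using pq2 by blast
        qed
      qed
      have m: "nat (b - q') < nat (b - a)" using \<open>a + 1 < q'\<close> pq(3) by simp
      have "0 \<le> q'" using \<open>a + 1 < q'\<close> less.prems(1) by simp
      from less.hyps[OF m this pq(3) g] obtain Bs where "black_arc_seq A q' Bs b" by blast
      moreover have "(a, q', Black) \<in> A" using AC[OF cq] less.prems(1) by simp
      ultimately have "black_arc_seq A a ((a, q', Black) # Bs) b"
        by (simp add: black_arc_seq_def src_def tgt_def col_def)
      thus ?thesis by blast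
    qed
  qed
qed


lemma good_from:
  assumes inv: "Inv C" and ij: "(i,j) \<in> C" and s: "i \<le> s" "s < j" "ew s \<noteq> Cross"
    and Hs: "\<And>p' q'. (p',q') \<in> C \<Longrightarrow> i < p' \<Longrightarrow> q' < j \<Longrightarrow> s < q' \<Longrightarrow> s < p'"
  shows "good C s (j - 1)"
  unfolding good_def
proof (intro allI impI)
  note I1 = Inv_parts(1)[OF inv] and I2 = Inv_parts(2)[OF inv] and I3 = Inv_parts(3)[OF inv]
  fix p assume p: "s < p \<and> p \<le> j - 1"
  hence ip: "i < p" "p < j" using s by auto
  have jn: "j \<le> int n" and wj: "ew j = Wedge" using I1[OF ij] by auto
  from I3[OF ij ip]
  show "(\<exists>x. double_entry is x \<and> (p = int x - 1 \<or> p = int x) \<and> s \<le> int x - 2 \<and> int x \<le> j - 1) \<or>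
     (\<exists>p' q'. (p',q') \<in> C \<and> s < p' \<and> q' \<le> j - 1 \<and> (p = p' \<or> p = q'))"
  proof
    assume "ew p = Cross"
    then obtain x where x: "double_entry is x" "p = int x \<or> p = int x - 1"
      using ew_cross ip jn by fastforce
    have c: "ew (int x) = Cross" "ew (int x - 1) = Cross" using de_cross x(1) by auto
    have "int x \<noteq> j" using c wj by auto
    hence "int x \<le> j - 1" using x(2) ip by auto
    moreover have "int x - 1 \<noteq> s" using c s(3) by auto
    hence "s \<le> int x - 2" using x(2) p by auto
    ultimately show ?thesis using x by blast
  next
    assume "\<exists>p' q'. (p',q') \<in> C \<and> i < p' \<and> q' < j \<and> (p = p' \<or> p = q')"
    then obtain p' q' where pq: "(p',q') \<in> C" "i < p'" "q' < j" "p = p' \<or> p = q'" by blast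
    have "p' < q'" using I1[OF pq(1)] by blast
    hence "s < q'" using pq(4) p by auto
    hence "s < p'" using Hs pq by blast
    thus ?thesis using pq by auto
  qed
qed

end

theorem proposition6p9:
  fixes n k :: nat and "is" trow brow :: "nat list"
  assumes "2 * k \<le> n"
    and "std_tableau n k is trow brow"
  defines "A \<equiv> dep_arcs n k is trow brow"
  shows "(\<forall>B \<in> A. col B = Black \<and> bval B > 1 \<longrightarrow>
            (\<exists>Bs. black_arc_seq A (src B + 1) Bs (tgt B - 1)))
       \<and> (\<forall>B \<in> A. col B = Green \<and> bval B > 1 \<longrightarrow>
            (let G = {B' \<in> A. col B' = Green \<and> B' \<noteq> B \<and> nested B' B} in
              (G = {} \<longrightarrow> (\<exists>Bs. black_arc_seq A 0 Bs (tgt B - 1))) \<and>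
              (G \<noteq> {} \<longrightarrow> (\<exists>Bs. black_arc_seq A (Max (tgt ` G)) Bs (tgt B - 1)))))"
proof -
  interpret tab n k "is" trow brow using assms(1,2) by unfold_locales
  have AD: "\<And>x. double_entry is x \<Longrightarrow> (int x - 2, int x, Black) \<in> A"
    unfolding A_def dep_arcs_def by blast
  have Acup: "\<And>i j. is_cup n k is trow brow i j \<Longrightarrow> (i - 1, j, if i \<le> 0 then Green else Black) \<in> A"
    unfolding A_def dep_arcs_def by blast
  have Acases: "\<And>B. B \<in> A \<Longrightarrow> (\<exists>x. double_entry is x \<and> B = (int x - 2, int x, Black)) \<or>
        (\<exists>i j. is_cup n k is trow brow i j \<and> B = (i - 1, j, if i \<le> 0 then Green else Black))"
    unfolding A_def dep_arcs_def by blast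
  have ACof: "\<And>C p q. final_cups n k is trow brow C \<Longrightarrow> (p,q) \<in> C \<Longrightarrow> 1 \<le> p \<Longrightarrow> (p - 1, q, Black) \<in> A"
  proof -
    fix C p q assume "final_cups n k is trow brow C" "(p,q) \<in> C" "1 \<le> p"
    hence "is_cup n k is trow brow p q" unfolding is_cup_def by blast
    from Acup[OF this] \<open>1 \<le> p\<close> show "(p - 1, q, Black) \<in> A" by simp
  qed
  have invf: "\<And>C. final_cups n k is trow brow C \<Longrightarrow> Inv C"
    using Inv_reach unfolding final_cups_def by blast
  have cupC: "\<And>C i j. final_cups n k is trow brow C \<Longrightarrow> is_cup n k is trow brow i j \<Longrightarrow> (i,j) \<in> C"
    using final_unique unfolding is_cup_def by blast
  show ?thesis
  proof (intro conjI ballI impI)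
    fix B assume B: "B \<in> A" "col B = Black \<and> bval B > 1"
    from Acases[OF B(1)] show "\<exists>Bs. black_arc_seq A (src B + 1) Bs (tgt B - 1)"
    proof
      assume "\<exists>x. double_entry is x \<and> B = (int x - 2, int x, Black)"
      then obtain x where "B = (int x - 2, int x, Black)" by blast
      hence "bval B = 1" by (simp add: bval_def src_def tgt_def)
      thus ?thesis using B by simp
    next
      assume "\<exists>i j. is_cup n k is trow brow i j \<and> B = (i - 1, j, if i \<le> 0 then Green else Black)"
      then obtain i j where ij: "is_cup n k is trow brow i j" "B = (i - 1, j, if i \<le> 0 then Green else Black)"
        by blast
      have i1: "1 \<le> i" using ij(2) B(2) by (cases "i \<le> 0") (auto simp: col_def)
      obtain C where C: "final_cups n k is trow brow C" "(i,j) \<in> C"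
        using ij(1) unfolding is_cup_def by blast
      have inv: "Inv C" using invf C(1) .
      have l: "i < j" "ew i = Vee" using Inv_parts(1)[OF inv C(2)] by auto
      have g: "good C i (j - 1)"
        by (rule good_from[OF inv C(2)]) (use l in auto)
      have "\<exists>Bs. black_arc_seq A i Bs (j - 1)"
        by (rule reach[OF inv AD ACof[OF C(1)] _ _ g]) (use l i1 in auto)
      thus ?thesis using ij(2) by (simp add: src_def tgt_def)
    qed
  next
    fix B assume B: "B \<in> A" "col B = Green \<and> bval B > 1"
    have Agreen: "\<And>B. B \<in> A \<Longrightarrow> col B = Green \<Longrightarrow> \<exists>i j. is_cup n k is trow brow i j \<and> B = (i - 1, j, Green) \<and> i \<le> 0"
    proof -
      fix B assume b: "B \<in> A" "col B = Green"
      from Acases[OF b(1)] show "\<exists>i j. is_cup n k is trow brow i j \<and> B = (i - 1, j, Green) \<and> i \<le> 0"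
      proof
        assume "\<exists>x. double_entry is x \<and> B = (int x - 2, int x, Black)"
        hence "col B = Black" by (auto simp: col_def)
        thus ?thesis using b(2) by simp
      next
        assume "\<exists>i j. is_cup n k is trow brow i j \<and> B = (i - 1, j, if i \<le> 0 then Green else Black)"
        then obtain i j where ij: "is_cup n k is trow brow i j" "B = (i - 1, j, if i \<le> 0 then Green else Black)" by blast
        have "i \<le> 0"
        proof (rule ccontr)
          assume "\<not> i \<le> 0"
          hence "col B = Black" using ij(2) by (simp add: col_def)
          thus False using b(2) by simp
        qed
        thus ?thesis using ij by auto
      qed
    qed
    from Agreen[OF B(1)] B(2) obtain i j where ij: "is_cup n k is trow brow i j" "B = (i - 1, j, Green)" "i \<le> 0"
      by blast
    obtain C where C: "final_cups n k is trow brow C" "(i,j) \<in> C"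
      using ij(1) unfolding is_cup_def by blast
    have inv: "Inv C" using invf C(1) .
    note I1 = Inv_parts(1)[OF inv] and I2 = Inv_parts(2)[OF inv] and I3 = Inv_parts(3)[OF inv]
    have l: "i < j" "ew i = Vee" "ew j = Wedge" using I1[OF C(2)] by auto
    define G where "G = {B' \<in> A. col B' = Green \<and> B' \<noteq> B \<and> nested B' B}"
    have inG: "(p' - 1, q', Green) \<in> G" if "(p',q') \<in> C" "p' \<le> 0" "i \<le> p'" "q' < j" for p' q'
    proof -
      have "is_cup n k is trow brow p' q'" using that C(1) unfolding is_cup_def by blast
      from Acup[OF this] that(2) have "(p' - 1, q', Green) \<in> A" by simp
      moreover have "p' < q'" using I1[OF that(1)] by blast
      moreover have "(p' - 1, q', Green) \<noteq> B" using that(4) ij(2) by auto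
      moreover have "nested (p' - 1, q', Green) B" using that ij(2) \<open>p' < q'\<close>
        by (simp add: nested_def src_def tgt_def)
      ultimately show ?thesis unfolding G_def by (simp add: col_def)
    qed
    have Gform: "\<exists>p' q'. (p',q') \<in> C \<and> B' = (p' - 1, q', Green) \<and> i < p' \<and> p' \<le> 0 \<and> q' < j" if "B' \<in> G" for B'
    proof -
      from that have b: "B' \<in> A" "col B' = Green" "B' \<noteq> B" "nested B' B" unfolding G_def by auto
      from Agreen[OF b(1,2)] obtain p' q' where pq: "is_cup n k is trow brow p' q'" "B' = (p' - 1, q', Green)" "p' \<le> 0"
        by blast
      have pc: "(p',q') \<in> C" using cupC[OF C(1) pq(1)] .
      have "(p',q') \<noteq> (i,j)"
      proof
        assume "(p',q') = (i,j)"
        hence "B' = B" using pq(2) ij(2) by simp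
        thus False using b(3) by simp
      qed
      hence ne: "p' \<noteq> i" "q' \<noteq> j" using I2[OF pc C(2)] by blast+
      have "src B \<le> src B'" "tgt B' \<le> tgt B" using b(4) unfolding nested_def by blast+
      hence "i - 1 \<le> p' - 1" "q' \<le> j" using pq(2) ij(2) by (simp_all add: src_def tgt_def)
      hence "i < p'" "q' < j" using ne by linarith+
      thus ?thesis using pc pq(2,3) by blast
    qed
    have "(G = {} \<longrightarrow> (\<exists>Bs. black_arc_seq A 0 Bs (tgt B - 1))) \<and>
              (G \<noteq> {} \<longrightarrow> (\<exists>Bs. black_arc_seq A (Max (tgt ` G)) Bs (tgt B - 1)))"
    proof (intro conjI impI)
      assume G0: "G = {}"
      have i0: "i = 0"
      proof (rule ccontr)
        assume "i \<noteq> 0"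
        hence "i + 1 \<le> 0" using ij(3) by simp
        hence v: "ew (i + 1) = Vee" by (simp add: ext_weight_def)
        have "0 < j" using l(3) by (auto simp: ext_weight_def split: if_splits)
        hence "i < i + 1" "i + 1 < j" using \<open>i + 1 \<le> 0\<close> by auto
        from I3[OF C(2) this] v obtain p' q' where pq: "(p',q') \<in> C" "i < p'" "q' < j" "i + 1 = p' \<or> i + 1 = q'"
          by auto
        have "p' < q'" using I1[OF pq(1)] by blast
        hence "p' = i + 1" using pq by auto
        hence "(p' - 1, q', Green) \<in> G" using inG[OF pq(1) _ _ pq(3)] \<open>i + 1 \<le> 0\<close> by simp
        thus False using G0 by blast
      qed
      have g: "good C 0 (j - 1)"
        by (rule good_from[OF inv C(2)]) (use l i0 in \<open>auto simp: ext_weight_def\<close>)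
      have "\<exists>Bs. black_arc_seq A 0 Bs (j - 1)"
        by (rule reach[OF inv AD ACof[OF C(1)] _ _ g]) (use l i0 in auto)
      thus "\<exists>Bs. black_arc_seq A 0 Bs (tgt B - 1)" using ij(2) by (simp add: tgt_def)
    next
      assume Gne: "G \<noteq> {}"
      have "tgt ` G \<subseteq> snd ` C"
      proof
        fix t assume "t \<in> tgt ` G"
        then obtain B' where "B' \<in> G" "t = tgt B'" by blast
        with Gform obtain p' q' where "(p',q') \<in> C" "t = q'" by (fastforce simp: tgt_def)
        thus "t \<in> snd ` C" by force
      qed
      hence finG: "finite (tgt ` G)" using Inv_parts(4)[OF inv] finite_subset by blast
      define M where "M = Max (tgt ` G)"
      have "M \<in> tgt ` G" unfolding M_def using finG Gne by (intro Max_in) auto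
      then obtain B' where "B' \<in> G" "tgt B' = M" by blast
      with Gform obtain i' where c': "(i',M) \<in> C" "i < i'" "i' \<le> 0" "M < j"
        by (fastforce simp: tgt_def)
      have Mge: "\<And>t. t \<in> tgt ` G \<Longrightarrow> t \<le> M" unfolding M_def using finG by simp
      have wM: "ew M = Wedge" using I1[OF c'(1)] by blast
      have M0: "0 < M" using wM by (auto simp: ext_weight_def split: if_splits)
      have Hs: "M < p'" if pq: "(p',q') \<in> C" "i < p'" "q' < j" "M < q'" for p' q'
      proof (rule ccontr)
        assume "\<not> M < p'"
        show False
        proof (cases "p' \<le> 0")
          case True
          hence "(p' - 1, q', Green) \<in> G" using inG pq by auto
          hence "tgt (p' - 1, q', Green) \<in> tgt ` G" by blast
          hence "q' \<le> M" using Mge by (simp add: tgt_def)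
          thus False using pq(4) by simp
        next
          case False
          have "ew p' = Vee" using I1[OF pq(1)] by blast
          hence "p' \<noteq> M" using wM by auto
          hence r: "i' < p'" "p' < M" using False c'(3) \<open>\<not> M < p'\<close> by auto
          from I3[OF c'(1) r] \<open>ew p' = Vee\<close> obtain p3 q3 where
            c3: "(p3,q3) \<in> C" "q3 < M" "p' = p3 \<or> p' = q3" by auto
          have "ew q3 = Wedge" using I1[OF c3(1)] by blast
          hence "p' = p3" using c3(3) \<open>ew p' = Vee\<close> by auto
          hence "q3 = q'" using I2[OF c3(1) pq(1)] by blast
          thus False using c3(2) pq(4) by simp
        qed
      qed
      have g: "good C M (j - 1)"
        by (rule good_from[OF inv C(2)]) (use c' wM Hs M0 in auto)
      have "\<exists>Bs. black_arc_seq A M Bs (j - 1)"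
        by (rule reach[OF inv AD ACof[OF C(1)] _ _ g]) (use M0 c' in auto)
      thus "\<exists>Bs. black_arc_seq A (Max (tgt ` G)) Bs (tgt B - 1)" using ij(2) M_def by (simp add: tgt_def)
    qed
    thus "let G = {B' \<in> A. col B' = Green \<and> B' \<noteq> B \<and> nested B' B} in
              (G = {} \<longrightarrow> (\<exists>Bs. black_arc_seq A 0 Bs (tgt B - 1))) \<and>
              (G \<noteq> {} \<longrightarrow> (\<exists>Bs. black_arc_seq A (Max (tgt ` G)) Bs (tgt B - 1)))"
      unfolding G_def Let_def .
  qed
qed

end
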